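(* Let $\mu$ be a probability density on $\mathbb{R}^L$ that is strictly positive and $C^\infty$, whose moment generating function is finite everywhere, and whose mixed partial derivatives of all orders decay super-exponentially at infinity. Let $X\sim\mu$. For $r\in\mathbb{N}$ and $i\in\{2,\dots,L\}$ define, for $x\in\mathbb{R}^L$, $$h_r(x)=(-1)^r\frac{1}{\mu(x)}\frac{d^r}{dt^r}\mu(x+t\mathbf{e}_1)\Big|_{t=0},\qquad h_{r1;i}(x)=(-1)^{r+1}\frac{1}{\mu(x)}\frac{\partial^{r+1}}{\partial t^r\partial s}\mu(x+t\mathbf{e}_1+s\mathbf{e}_i)\Big|_{t=s=0}.$$ Then for every $\theta=(\theta_1,\dots,\theta_L)\in\mathbb{R}^L$, $$\frac{\mathbb{E}_\mu[h_r(X)\exp(X^\top\theta)]}{\mathbb{E}_\mu[\exp(X^\top\theta)]}=\theta_1^r\qquad\text{and}\qquad\frac{\mathbb{E}_\mu[h_{r1;i}(X)\exp(X^\top\theta)]}{\mathbb{E}_\mu[\exp(X^\top\theta)]}=\theta_1^r\theta_i.$$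
   Context: $\mathbf{e}_1,\dots,\mathbf{e}_L$ denote the canonical basis vectors of $\mathbb{R}^L$. *)

theory Defs
  imports "HOL-Analysis.Analysis"
begin

definition partial_dir :: "'n::finite \<Rightarrow> (real^'n \<Rightarrow> real) \<Rightarrow> real^'n \<Rightarrow> real" where
  "partial_dir j f x = deriv (\<lambda>t. f (x + t *\<^sub>R axis j 1)) 0"

text \<open>Mixed partial derivative of arbitrary order; the list gives the directions,
  the last element of the list is applied first.\<close>
fun partials :: "'n::finite list \<Rightarrow> (real^'n \<Rightarrow> real) \<Rightarrow> real^'n \<Rightarrow> real" where
  "partials [] f = f"
| "partials (j # js) f = partial_dir j (partials js f)"

definition smooth_fun :: "(real^'n::finite \<Rightarrow> real) \<Rightarrow> bool" where
  "smooth_fun f \<longleftrightarrow>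
     (\<forall>js. continuous_on UNIV (partials js f)) \<and>
     (\<forall>js j x. (\<lambda>t. partials js f (x + t *\<^sub>R axis j 1)) differentiable (at 0))"

definition prob_density :: "(real^'n::finite \<Rightarrow> real) \<Rightarrow> bool" where
  "prob_density \<mu> \<longleftrightarrow> (\<forall>x. 0 \<le> \<mu> x) \<and> integrable lborel \<mu> \<and> integral\<^sup>L lborel \<mu> = 1"

definition mgf_finite :: "(real^'n::finite \<Rightarrow> real) \<Rightarrow> bool" where
  "mgf_finite \<mu> \<longleftrightarrow> (\<forall>\<theta>. integrable lborel (\<lambda>x. exp (x \<bullet> \<theta>) * \<mu> x))"

definition superexp_decay :: "(real^'n::finite \<Rightarrow> real) \<Rightarrow> bool" where
  "superexp_decay \<mu> \<longleftrightarrow>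
     (\<forall>js c. ((\<lambda>x. partials js \<mu> x * exp (c * norm x)) \<longlongrightarrow> 0) at_infinity)"

definition expect :: "(real^'n::finite \<Rightarrow> real) \<Rightarrow> (real^'n \<Rightarrow> real) \<Rightarrow> real" where
  "expect \<mu> f = integral\<^sup>L lborel (\<lambda>x. f x * \<mu> x)"

text \<open>h_r, with k the first coordinate.\<close>
definition h_fun :: "'n::finite \<Rightarrow> (real^'n \<Rightarrow> real) \<Rightarrow> nat \<Rightarrow> real^'n \<Rightarrow> real" where
  "h_fun k \<mu> r x = (-1)^r / \<mu> x * (deriv ^^ r) (\<lambda>t. \<mu> (x + t *\<^sub>R axis k 1)) 0"

definition h_mixed :: "'n::finite \<Rightarrow> 'n \<Rightarrow> (real^'n \<Rightarrow> real) \<Rightarrow> nat \<Rightarrow> real^'n \<Rightarrow> real" where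
  "h_mixed k i \<mu> r x = (-1)^(r+1) / \<mu> x *
     (deriv ^^ r) (\<lambda>t. deriv (\<lambda>s. \<mu> (x + t *\<^sub>R axis k 1 + s *\<^sub>R axis i 1)) 0) 0"

end

theory Submission
  imports Defs "HOL-Probability.Sinc_Integral"
begin


lemma exp_abs_integrable: "integrable lborel (\<lambda>x::real. exp (-\<bar>x\<bar>))"
proof -
  have i0: "integrable lborel (\<lambda>x::real. indicator {0<..} x *\<^sub>R exp (-x))"
    using integrable_I0i_exp_mscale[of 1] by (simp add: set_integrable_def)
  have i1: "integrable lborel (\<lambda>x::real. indicator {0<..} (1 + 1*x) *\<^sub>R exp (-(1 + 1*x)))"
    using lborel_integrable_real_affine_iff[of 1 "\<lambda>x. indicator {0<..} x *\<^sub>R exp (-x)" 1] i0 by simp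
  have i2: "integrable lborel (\<lambda>x::real. indicator {0<..} (1 + (-1)*x) *\<^sub>R exp (-(1 + (-1)*x)))"
    using lborel_integrable_real_affine_iff[of "-1" "\<lambda>x. indicator {0<..} x *\<^sub>R exp (-x)" 1] i0 by simp
  have "integrable lborel (\<lambda>x::real. exp 1 * (indicator {0<..} (1 + 1*x) *\<^sub>R exp (-(1 + 1*x)) + indicator {0<..} (1 + (-1)*x) *\<^sub>R exp (-(1 + (-1)*x))))"
    by (intro integrable_mult_right Bochner_Integration.integrable_add[OF i1 i2])
  then show ?thesis
  proof (rule Bochner_Integration.integrable_bound)
    show "(\<lambda>x::real. exp (-\<bar>x\<bar>)) \<in> borel_measurable lborel" by measurable
    show "AE x in lborel. norm (exp (-\<bar>x::real\<bar>)) \<le> norm (exp 1 * (indicator {0<..} (1 + 1*x) *\<^sub>R exp (-(1 + 1*x)) + indicator {0<..} (1 + (-1)*x) *\<^sub>R exp (-(1 + (-1)*x))))"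
    proof (intro AE_I2)
      fix x :: real assume "x \<in> space lborel"
      have e1: "exp 1 * exp (-(1 + x)) = exp (-x)" "exp 1 * exp (-(1 - x)) = exp x"
        by (simp_all flip: exp_add)
      show "norm (exp (-\<bar>x\<bar>)) \<le> norm (exp 1 * (indicator {0<..} (1 + 1*x) *\<^sub>R exp (-(1 + 1*x)) + indicator {0<..} (1 + (-1)*x) *\<^sub>R exp (-(1 + (-1)*x))))"
      proof (cases "x \<ge> 0")
        case True
        then show ?thesis using e1 by (auto simp: indicator_def distrib_left)
      next
        case False
        then show ?thesis using e1 by (auto simp: indicator_def distrib_left)
      qed
    qed
  qed
qed

definition Dom :: "'a::euclidean_space \<Rightarrow> real" where
  "Dom x = (\<Prod>b\<in>Basis. exp (-\<bar>x \<bullet> b\<bar>))"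

lemma Dom_cont: "continuous_on UNIV Dom"
  unfolding Dom_def by (intro continuous_intros)

lemma Dom_integrable: "integrable lborel (Dom :: 'a::euclidean_space \<Rightarrow> real)"
proof -
  have ps: "product_sigma_finite (\<lambda>_::'a. lborel::real measure)"
    by (simp add: product_sigma_finite_def lborel.sigma_finite_measure_axioms)
  have "integrable (\<Pi>\<^sub>M b\<in>Basis. lborel) (\<lambda>f. \<Prod>b\<in>(Basis::'a set). exp (-\<bar>f b::real\<bar>))"
    using product_sigma_finite.product_integrable_prod[OF ps, where f="\<lambda>_ t. exp (-\<bar>t\<bar>)" and I="Basis::'a set"] exp_abs_integrable by simp
  then have "integrable (\<Pi>\<^sub>M b\<in>Basis. lborel) (\<lambda>f. Dom (\<Sum>b\<in>(Basis::'a set). (f b::real) *\<^sub>R b))"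
  proof -
    have eq: "Dom (\<Sum>b\<in>(Basis::'a set). (f b::real) *\<^sub>R b) = (\<Prod>b\<in>(Basis::'a set). exp (-\<bar>f b::real\<bar>))" for f
      unfolding Dom_def by (intro prod.cong refl) (simp add: inner_sum_left inner_Basis if_distrib sum.delta cong: if_cong)
    show ?thesis using \<open>integrable _ _\<close> by (simp only: eq)
  qed
  moreover have "Dom \<in> borel_measurable (borel :: 'a measure)"
    using Dom_cont borel_measurable_continuous_onI by blast
  ultimately show ?thesis
    by (subst lborel_eq) (subst integrable_distr_eq; simp)
qed

lemma Dom_bound: "exp (- real DIM('a) * norm x) \<le> Dom (x::'a::euclidean_space)"
proof -
  have "(\<Sum>b\<in>(Basis::'a set). \<bar>x \<bullet> b\<bar>) \<le> (\<Sum>b\<in>(Basis::'a set). norm x)"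
    by (intro sum_mono Basis_le_norm)
  then have "exp (-(\<Sum>b\<in>(Basis::'a set). \<bar>x \<bullet> b\<bar>)) \<ge> exp (- real DIM('a) * norm x)"
    by simp
  then show ?thesis unfolding Dom_def by (simp add: exp_sum flip: sum_negf)
qed



lemma deriv_line:
  fixes x v :: "'a::real_vector"
  shows "deriv (\<lambda>t. f (x + t *\<^sub>R v)) s = deriv (\<lambda>u. f ((x + s *\<^sub>R v) + u *\<^sub>R v)) (0::real)"
proof -
  have e: "(\<lambda>u. (\<lambda>t. f (x + t *\<^sub>R v)) (u + s)) = (\<lambda>u. f ((x + s *\<^sub>R v) + u *\<^sub>R v))"
    by (rule ext) (simp add: scaleR_add_left add_ac)
  show ?thesis unfolding deriv_def using DERIV_shift[of "\<lambda>t. f (x + t *\<^sub>R v)" _ 0 s] e by simp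
qed

lemma deriv_funpow_line:
  "(deriv ^^ r) (\<lambda>t. f (x + t *\<^sub>R axis j 1)) = (\<lambda>t. partials (replicate r j) f (x + t *\<^sub>R axis j 1))"
proof (induction r)
  case 0
  then show ?case by simp
next
  case (Suc r)
  show ?case
    by (rule ext) (simp add: Suc deriv_line[of _ x] partial_dir_def)
qed

lemma partials_append: "partials (xs @ ys) f = partials xs (partials ys f)"
  by (induction xs) auto

context
  fixes \<mu> :: "real^'n::finite \<Rightarrow> real"
  assumes sm: "smooth_fun \<mu>" and dec: "superexp_decay \<mu>"
begin

lemma partials_cont: "continuous_on UNIV (partials js \<mu>)"
  using sm smooth_fun_def by blast

lemma partials_meas: "partials js \<mu> \<in> borel_measurable lborel"
  using borel_measurable_continuous_onI[OF partials_cont] by simp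

lemma partials_bound: "\<exists>M. \<forall>x. \<bar>partials js \<mu> x\<bar> \<le> M * exp (-c * norm x)"
proof -
  let ?g = "\<lambda>x. partials js \<mu> x * exp (c * norm x)"
  have "(?g \<longlongrightarrow> 0) at_infinity" using dec superexp_decay_def by blast
  then have "eventually (\<lambda>x. dist (?g x) 0 < 1) at_infinity"
    by (rule tendstoD) simp
  then obtain R where R: "\<And>x. norm x \<ge> R \<Longrightarrow> \<bar>?g x\<bar> < 1"
    by (auto simp: eventually_at_infinity)
  have "continuous_on (cball 0 R) ?g"
    using partials_cont by (intro continuous_intros continuous_on_subset[OF partials_cont]) auto
  then have "compact (?g ` cball 0 R)" by (rule compact_continuous_image) simp
  then obtain B where B: "\<forall>y \<in> ?g ` cball 0 R. norm y \<le> B"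
    using compact_imp_bounded bounded_iff by metis
  show ?thesis
  proof (intro exI allI)
    fix x
    have "\<bar>?g x\<bar> \<le> max 1 B"
    proof (cases "norm x \<ge> R")
      case True then show ?thesis using R[of x] by simp
    next
      case False
      then have "x \<in> cball 0 R" by simp
      then have "norm (?g x) \<le> B" using B by blast
      then show ?thesis by simp
    qed
    then have "\<bar>partials js \<mu> x\<bar> * exp (c * norm x) \<le> max 1 B" by (simp add: abs_mult)
    then have "\<bar>partials js \<mu> x\<bar> * exp (c * norm x) * exp (-c * norm x) \<le> max 1 B * exp (-c * norm x)"
      by (intro mult_right_mono) auto
    then show "\<bar>partials js \<mu> x\<bar> \<le> max 1 B * exp (-c * norm x)"
      by (simp add: mult.assoc flip: exp_add)
  qed
qed

lemma has_deriv_line: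
  "((\<lambda>t. partials js \<mu> (x + t *\<^sub>R axis j 1)) has_real_derivative
      partials (j#js) \<mu> (x + s *\<^sub>R axis j 1)) (at s)"
proof -
  let ?h = "\<lambda>u. partials js \<mu> ((x + s *\<^sub>R axis j 1) + u *\<^sub>R axis j 1)"
  have "?h differentiable at 0" using sm smooth_fun_def by blast
  then have "(?h has_real_derivative deriv ?h 0) (at 0)"
    using DERIV_deriv_iff_real_differentiable by blast
  then have d: "(?h has_real_derivative partials (j#js) \<mu> (x + s *\<^sub>R axis j 1)) (at 0)"
    by (simp add: partial_dir_def)
  have e: "(\<lambda>u. (\<lambda>t. partials js \<mu> (x + t *\<^sub>R axis j 1)) (u + s)) = ?h"
    by (rule ext) (simp add: scaleR_add_left add_ac)
  show ?thesis using DERIV_shift[of "\<lambda>t. partials js \<mu> (x + t *\<^sub>R axis j 1)" _ 0 s] d e by simp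
qed

lemma shifted_bound:
  "\<exists>M. \<forall>x t. \<bar>t\<bar> \<le> 1 \<longrightarrow>
     \<bar>partials js \<mu> (x + t *\<^sub>R axis j 1) * exp (x \<bullet> \<theta>)\<bar> \<le> M * Dom x"
proof -
  define c where "c = norm \<theta> + real DIM(real^'n)"
  obtain M where M: "\<And>y. \<bar>partials js \<mu> y\<bar> \<le> M * exp (-c * norm y)"
    using partials_bound by blast
  have "\<bar>partials js \<mu> 0\<bar> \<le> M" using M[of 0] by simp
  then have M0: "M \<ge> 0" by linarith
  show ?thesis
  proof (intro exI allI impI)
    fix x :: "real^'n" and t :: real
    assume t: "\<bar>t\<bar> \<le> 1"
    have c0: "c \<ge> 0" unfolding c_def by simp
    have "norm x \<le> norm (x + t *\<^sub>R axis j 1) + \<bar>t\<bar>"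
      using norm_triangle_ineq4[of "x + t *\<^sub>R axis j 1" "t *\<^sub>R axis j 1"] by simp
    then have n: "norm x - 1 \<le> norm (x + t *\<^sub>R axis j 1)" using t by simp
    have "\<bar>partials js \<mu> (x + t *\<^sub>R axis j 1)\<bar> \<le> M * exp (-c * norm (x + t *\<^sub>R axis j 1))"
      by (rule M)
    also have "\<dots> \<le> M * exp (-c * (norm x - 1))"
      using n c0 M0 by (intro mult_left_mono) (auto intro!: mult_left_mono)
    finally have A: "\<bar>partials js \<mu> (x + t *\<^sub>R axis j 1)\<bar> \<le> M * exp (-c * (norm x - 1))" .
    have "x \<bullet> \<theta> \<le> norm x * norm \<theta>" by (rule norm_cauchy_schwarz)
    then have B: "exp (x \<bullet> \<theta>) \<le> exp (norm x * norm \<theta>)" by simp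
    have "\<bar>partials js \<mu> (x + t *\<^sub>R axis j 1) * exp (x \<bullet> \<theta>)\<bar>
        \<le> M * exp (-c * (norm x - 1)) * exp (norm x * norm \<theta>)"
      unfolding abs_mult using A B by (intro mult_mono) auto
    also have "\<dots> = M * exp c * exp (- real DIM(real^'n) * norm x)"
      by (simp add: c_def mult.assoc flip: exp_add) (simp add: algebra_simps)
    also have "\<dots> \<le> M * exp c * Dom x"
      using M0 by (intro mult_left_mono Dom_bound) auto
    finally show "\<bar>partials js \<mu> (x + t *\<^sub>R axis j 1) * exp (x \<bullet> \<theta>)\<bar> \<le> M * exp c * Dom x" .
  qed
qed

lemma shifted_meas:
  "(\<lambda>x. partials js \<mu> (x + t *\<^sub>R axis j 1) * exp (x \<bullet> \<theta>)) \<in> borel_measurable lborel"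
proof -
  have "continuous_on UNIV (\<lambda>x. partials js \<mu> (x + t *\<^sub>R axis j 1) * exp (x \<bullet> \<theta>))"
    by (intro continuous_intros continuous_on_compose2[OF partials_cont]) auto
  then show ?thesis using borel_measurable_continuous_onI by simp
qed

lemma shifted_integrable:
  assumes "\<bar>t\<bar> \<le> 1"
  shows "integrable lborel (\<lambda>x. partials js \<mu> (x + t *\<^sub>R axis j 1) * exp (x \<bullet> \<theta>))"
proof -
  obtain M where M: "\<And>x t. \<bar>t\<bar> \<le> 1 \<Longrightarrow>
     \<bar>partials js \<mu> (x + t *\<^sub>R axis j 1) * exp (x \<bullet> \<theta>)\<bar> \<le> M * Dom x"
    using shifted_bound[of js j \<theta>] by blast
  have "integrable lborel (\<lambda>x. M * Dom x)" by (intro integrable_mult_right Dom_integrable)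
  then show ?thesis
  proof (rule Bochner_Integration.integrable_bound)
    show "AE x in lborel. norm (partials js \<mu> (x + t *\<^sub>R axis j 1) * exp (x \<bullet> \<theta>)) \<le> norm (M * Dom x)"
      using M[OF assms] by (intro AE_I2) (smt (verit) real_norm_def)
  qed (rule shifted_meas)
qed

lemma plain_integrable: "integrable lborel (\<lambda>x. partials js \<mu> x * exp (x \<bullet> \<theta>))"
  using shifted_integrable[of 0 js] by simp

lemma translate_integral:
  "(\<integral>x. partials js \<mu> (x + t *\<^sub>R axis j 1) * exp (x \<bullet> \<theta>) \<partial>lborel)
     = exp (- t * \<theta> $ j) * (\<integral>x. partials js \<mu> x * exp (x \<bullet> \<theta>) \<partial>lborel)"
proof -
  define G where "G y = partials js \<mu> y * exp ((y - t *\<^sub>R axis j 1) \<bullet> \<theta>)" for y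
  have Gm: "G \<in> borel_measurable borel"
  proof -
    have "continuous_on UNIV G" unfolding G_def
      by (intro continuous_intros partials_cont)
    then show ?thesis using borel_measurable_continuous_onI by blast
  qed
  have "integral\<^sup>L lborel G = integral\<^sup>L (distr lborel borel ((+) (t *\<^sub>R axis j 1))) G"
    by (simp add: lborel_distr_plus)
  also have "\<dots> = (\<integral>x. G (t *\<^sub>R axis j 1 + x) \<partial>lborel)"
    by (rule integral_distr) (auto simp: Gm)
  also have "\<dots> = (\<integral>x. partials js \<mu> (x + t *\<^sub>R axis j 1) * exp (x \<bullet> \<theta>) \<partial>lborel)"
    by (simp add: G_def add.commute)
  finally have 1: "integral\<^sup>L lborel G = (\<integral>x. partials js \<mu> (x + t *\<^sub>R axis j 1) * exp (x \<bullet> \<theta>) \<partial>lborel)" .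
  have "G = (\<lambda>y. exp (- t * \<theta> $ j) * (partials js \<mu> y * exp (y \<bullet> \<theta>)))"
    by (rule ext) (simp add: G_def inner_diff_left inner_axis' exp_diff exp_minus field_simps)
  then have "integral\<^sup>L lborel G = exp (- t * \<theta> $ j) * (\<integral>x. partials js \<mu> x * exp (x \<bullet> \<theta>) \<partial>lborel)"
    by simp
  with 1 show ?thesis by simp
qed

lemma key_ibp:
  "(\<integral>x. partials (j#js) \<mu> x * exp (x \<bullet> \<theta>) \<partial>lborel)
     = - (\<theta> $ j) * (\<integral>x. partials js \<mu> x * exp (x \<bullet> \<theta>) \<partial>lborel)"
proof -
  let ?p = "partials js \<mu>" and ?q = "partials (j#js) \<mu>" and ?v = "axis j (1::real) :: real^'n"
  let ?E = "\<lambda>x::real^'n. exp (x \<bullet> \<theta>)"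
  define I where "I = (\<integral>x. ?p x * ?E x \<partial>lborel)"
  define T where "T m = 1 / (real m + 1)" for m :: nat
  have T0: "T m > 0" "T m \<le> 1" for m unfolding T_def by (auto simp: field_simps)
  have Tlim: "filterlim T (at 0) sequentially"
  proof -
    have "T \<longlonglongrightarrow> 0" unfolding T_def using LIMSEQ_Suc[OF lim_inverse_n'] 
      by (simp add: add.commute)
    moreover have "eventually (\<lambda>m. T m \<noteq> 0) sequentially" using T0 by (simp add: dual_order.strict_implies_not_eq)
    ultimately show ?thesis by (simp add: filterlim_at)
  qed
  obtain Mq where Mq: "\<And>x t. \<bar>t\<bar> \<le> 1 \<Longrightarrow> \<bar>?q (x + t *\<^sub>R ?v) * ?E x\<bar> \<le> Mq * Dom x"
    using shifted_bound[of "j#js" j \<theta>] by blast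
  define S where "S m x = (?p (x + T m *\<^sub>R ?v) * ?E x - ?p x * ?E x) / T m" for m x
  have lim_pt: "(\<lambda>m. S m x) \<longlonglongrightarrow> ?q x * ?E x" for x
  proof -
    let ?g = "\<lambda>t. ?p (x + t *\<^sub>R ?v)"
    have "(?g has_real_derivative ?q x) (at 0)" using has_deriv_line[of js x j 0] by simp
    then have "((\<lambda>y. (?g y - ?g 0) / (y - 0)) \<longlongrightarrow> ?q x) (at 0)"
      by (rule has_field_derivative_iff[THEN iffD1])
    from filterlim_compose[OF this Tlim]
    have "(\<lambda>m. (?g (T m) - ?g 0) / (T m - 0)) \<longlonglongrightarrow> ?q x" .
    then have "(\<lambda>m. (?g (T m) - ?g 0) / (T m - 0) * ?E x) \<longlonglongrightarrow> ?q x * ?E x"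
      by (rule tendsto_mult_right)
    moreover have "(?g (T m) - ?g 0) / (T m - 0) * ?E x = S m x" for m
      unfolding S_def by (simp add: field_simps)
    ultimately show ?thesis by simp
  qed
  have bnd: "\<bar>S m x\<bar> \<le> Mq * Dom x" for m x
  proof -
    let ?g = "\<lambda>t. ?p (x + t *\<^sub>R ?v)"
    have der: "\<And>z. (?g has_real_derivative ?q (x + z *\<^sub>R ?v)) (at z)"
      using has_deriv_line by blast
    have "continuous_on {0..T m} ?g"
      using der by (meson DERIV_isCont continuous_at_imp_continuous_on)
    moreover have "\<And>z. ?g differentiable at z" using der real_differentiable_def by blast
    ultimately obtain l z where z: "0 < z" "z < T m" "DERIV ?g z :> l" "?g (T m) - ?g 0 = (T m - 0) * l"
      using MVT[of 0 "T m" ?g] T0 by blast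
    have "l = ?q (x + z *\<^sub>R ?v)" using DERIV_unique[OF z(3) der] .
    then have "S m x = ?q (x + z *\<^sub>R ?v) * ?E x"
      unfolding S_def using z(4) T0[of m] by (simp add: field_simps)
    moreover have "\<bar>z\<bar> \<le> 1" using z T0[of m] by simp
    ultimately show ?thesis using Mq by simp
  qed
  have Sint: "integrable lborel (S m)" for m
    unfolding S_def using shifted_integrable[of "T m" js j \<theta>] plain_integrable[of js \<theta>] T0[of m]
    by (intro integrable_divide Bochner_Integration.integrable_diff) auto
  have conv: "(\<lambda>m. integral\<^sup>L lborel (S m)) \<longlonglongrightarrow> (\<integral>x. ?q x * ?E x \<partial>lborel)"
  proof (rule integral_dominated_convergence[where w="\<lambda>x. Mq * Dom x"])
    show "(\<lambda>x. ?q x * ?E x) \<in> borel_measurable lborel" using shifted_meas[of "j#js" 0 j \<theta>] by simp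
    show "S m \<in> borel_measurable lborel" for m using Sint[of m] by auto
    show "integrable lborel (\<lambda>x. Mq * Dom x)" by (intro integrable_mult_right Dom_integrable)
    show "AE x in lborel. (\<lambda>m. S m x) \<longlonglongrightarrow> ?q x * ?E x" using lim_pt by simp
    show "AE x in lborel. norm (S m x) \<le> Mq * Dom x" for m using bnd by simp
  qed
  have Seq: "integral\<^sup>L lborel (S m) = (exp (- T m * \<theta> $ j) - 1) / T m * I" for m
  proof -
    have "integral\<^sup>L lborel (S m) = ((\<integral>x. ?p (x + T m *\<^sub>R ?v) * ?E x \<partial>lborel) - I) / T m"
      unfolding S_def I_def using shifted_integrable[of "T m" js j \<theta>] plain_integrable[of js \<theta>] T0[of m]
      by (simp add: Bochner_Integration.integral_diff)
    also have "\<dots> = (exp (- T m * \<theta> $ j) - 1) / T m * I"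
      unfolding translate_integral I_def by (simp add: field_simps)
    finally show ?thesis .
  qed
  have "((\<lambda>t. exp (- t * \<theta> $ j)) has_real_derivative - \<theta> $ j) (at 0)"
    by (auto intro!: derivative_eq_intros)
  then have "((\<lambda>y. (exp (- y * \<theta> $ j) - exp (- 0 * \<theta> $ j)) / (y - 0)) \<longlongrightarrow> - \<theta> $ j) (at 0)"
    by (rule has_field_derivative_iff[THEN iffD1])
  from filterlim_compose[OF this Tlim]
  have "(\<lambda>m. (exp (- T m * \<theta> $ j) - 1) / T m) \<longlonglongrightarrow> - \<theta> $ j" by simp
  then have "(\<lambda>m. (exp (- T m * \<theta> $ j) - 1) / T m * I) \<longlonglongrightarrow> - \<theta> $ j * I"
    by (rule tendsto_mult_right)
  then have "(\<lambda>m. integral\<^sup>L lborel (S m)) \<longlonglongrightarrow> - \<theta> $ j * I" by (simp add: Seq)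
  from LIMSEQ_unique[OF conv this] show ?thesis by (simp add: I_def)
qed

lemma iter_ibp:
  "(\<integral>x. partials (replicate r j @ js) \<mu> x * exp (x \<bullet> \<theta>) \<partial>lborel)
     = (- (\<theta> $ j)) ^ r * (\<integral>x. partials js \<mu> x * exp (x \<bullet> \<theta>) \<partial>lborel)"
proof (induction r)
  case 0
  then show ?case by simp
next
  case (Suc r)
  have "(\<integral>x. partials (replicate (Suc r) j @ js) \<mu> x * exp (x \<bullet> \<theta>) \<partial>lborel)
     = (\<integral>x. partials (j # (replicate r j @ js)) \<mu> x * exp (x \<bullet> \<theta>) \<partial>lborel)" by simp
  also have "\<dots> = - (\<theta> $ j) * (\<integral>x. partials (replicate r j @ js) \<mu> x * exp (x \<bullet> \<theta>) \<partial>lborel)"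
    by (rule key_ibp)
  finally show ?case using Suc by simp
qed

end

theorem proposition1:
  fixes \<mu> :: "real^'n::finite \<Rightarrow> real" and k i :: 'n and r :: nat and \<theta> :: "real^'n"
  assumes "prob_density \<mu>"
    and "\<forall>x. \<mu> x > 0"
    and "smooth_fun \<mu>"
    and "mgf_finite \<mu>"
    and "superexp_decay \<mu>"
    and "i \<noteq> k"
  shows "expect \<mu> (\<lambda>x. h_fun k \<mu> r x * exp (x \<bullet> \<theta>)) / expect \<mu> (\<lambda>x. exp (x \<bullet> \<theta>)) = (\<theta> $ k) ^ r \<and>
         expect \<mu> (\<lambda>x. h_mixed k i \<mu> r x * exp (x \<bullet> \<theta>)) / expect \<mu> (\<lambda>x. exp (x \<bullet> \<theta>))
           = (\<theta> $ k) ^ r * (\<theta> $ i)"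
proof -
  note sm = assms(3) and dec = assms(5)
  have pos: "\<And>x. \<mu> x > 0" using assms(2) by blast
  define Z where "Z = (\<integral>x. \<mu> x * exp (x \<bullet> \<theta>) \<partial>lborel)"
  have intZ: "integrable lborel (\<lambda>x. \<mu> x * exp (x \<bullet> \<theta>))"
    using plain_integrable[OF sm dec, of "[]" \<theta>] by simp
  have Zne: "Z \<noteq> 0"
  proof
    assume "Z = 0"
    moreover have "AE x in lborel. 0 \<le> \<mu> x * exp (x \<bullet> \<theta>)"
      using pos by (intro AE_I2) (simp add: less_imp_le)
    ultimately have "AE x in lborel. \<mu> x * exp (x \<bullet> \<theta>) = 0"
      using integral_nonneg_eq_0_iff_AE[OF intZ] by (simp add: Z_def)
    then have "AE x in lborel. x \<notin> (UNIV :: (real^'n) set)"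
      by (rule eventually_mono) (use pos in \<open>auto simp: dual_order.strict_implies_not_eq\<close>)
    then have "(UNIV :: (real^'n) set) \<in> null_sets lborel"
      using AE_iff_null_sets[of UNIV lborel] by auto
    then show False by (simp add: null_sets_def)
  qed
  have den: "expect \<mu> (\<lambda>x. exp (x \<bullet> \<theta>)) = Z"
    unfolding expect_def Z_def by (simp add: mult.commute)
  have Z0: "(\<integral>x. partials [] \<mu> x * exp (x \<bullet> \<theta>) \<partial>lborel) = Z" by (simp add: Z_def)
  have pw1: "h_fun k \<mu> r x * exp (x \<bullet> \<theta>) * \<mu> x
      = (-1)^r * (partials (replicate r k @ []) \<mu> x * exp (x \<bullet> \<theta>))" for x
    using pos[of x] by (simp add: h_fun_def deriv_funpow_line field_simps)
  have num1: "expect \<mu> (\<lambda>x. h_fun k \<mu> r x * exp (x \<bullet> \<theta>)) = (-1)^r * ((- (\<theta> $ k)) ^ r * Z)"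
    unfolding expect_def pw1 using iter_ibp[OF sm dec, of r k "[]" \<theta>] Z0 by simp
  have inner: "(\<lambda>t. deriv (\<lambda>s. \<mu> (x + t *\<^sub>R axis k 1 + s *\<^sub>R axis i 1)) 0)
      = (\<lambda>t. partials [i] \<mu> (x + t *\<^sub>R axis k 1))" for x
    by (simp add: partial_dir_def)
  have pw2: "h_mixed k i \<mu> r x * exp (x \<bullet> \<theta>) * \<mu> x
      = (-1)^(r+1) * (partials (replicate r k @ [i]) \<mu> x * exp (x \<bullet> \<theta>))" for x
  proof -
    have "(deriv ^^ r) (\<lambda>t. deriv (\<lambda>s. \<mu> (x + t *\<^sub>R axis k 1 + s *\<^sub>R axis i 1)) 0) 0
        = partials (replicate r k @ [i]) \<mu> x"
      unfolding inner deriv_funpow_line partials_append by simp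
    then show ?thesis unfolding h_mixed_def using pos[of x] by (simp add: field_simps)
  qed
  have num2: "expect \<mu> (\<lambda>x. h_mixed k i \<mu> r x * exp (x \<bullet> \<theta>))
      = (-1)^(r+1) * ((- (\<theta> $ k)) ^ r * (- (\<theta> $ i) * Z))"
    unfolding expect_def pw2
    using iter_ibp[OF sm dec, of r k "[i]" \<theta>] key_ibp[OF sm dec, of i "[]" \<theta>] Z0 by simp
  have s1: "(-1::real)^r * (- a) ^ r = a ^ r" for a :: real
    by (simp flip: power_mult_distrib)
  show ?thesis
    unfolding num1 num2 den using Zne
    by (simp add: s1 field_simps flip: mult.assoc) 
qed

end
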